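(* Let $\mathbb{K}=(G,M,I)$ be a finite formal context with concept lattice $\underline{\mathfrak{B}}(\mathbb{K})$ and let $\underline{S}=\{s\}$ be an interval of $\underline{\mathfrak{B}}(\mathbb{K})$ with $|\underline{S}|=1$. Then $\underline{S}$ is quasi-dismantling for $\underline{\mathfrak{B}}(\mathbb{K})$ if and only if one of the following holds: $s$ is doubly irreducible; or $s=\top$ and $s$ is supremum-irreducible; or $s=\bot$ and $s$ is infimum-irreducible; or $s=\top=\bot$.
   Context: For $u\le v$ in a lattice $L$, $[u,v]=\{x\mid u\le x\le v\}$, $(v]=\{x\mid x\le v\}$, $[u)=\{x\mid u\le x\}$. An interval $[u,v]$ of $L$ is quasi-dismantling for $L$ if $u$ is supremum-prime in $(v]$ (for all $x,y\in(v]$, $u\le x\vee y$ implies $u\le x$ or $u\le y$) and $v$ is infimum-prime in $[u)$ (for all $x,y\in[u)$, $x\wedge y\le v$ implies $x\le v$ or $y\le v$). An element of a finite lattice is supremum-irreducible if it has exactly one lower neighbor, infimum-irreducible if it has exactly one upper neighbor, doubly irreducible if both. $\top,\bot$ denote the greatest and least elements of $\underline{\mathfrak{B}}(\mathbb{K})$. The concept lattice is the set of formal concepts $(A,B)$ ($A'=B$, $B'=A$) ordered by inclusion of extents. *)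

theory Defs
  imports Main
begin

definition intent_of :: "'g set \<Rightarrow> 'm set \<Rightarrow> ('g \<times> 'm) set \<Rightarrow> 'g set \<Rightarrow> 'm set" where
  "intent_of G M I A = {m \<in> M. \<forall>g\<in>A. (g, m) \<in> I}"

definition extent_of :: "'g set \<Rightarrow> 'm set \<Rightarrow> ('g \<times> 'm) set \<Rightarrow> 'm set \<Rightarrow> 'g set" where
  "extent_of G M I B = {g \<in> G. \<forall>m\<in>B. (g, m) \<in> I}"

definition concepts :: "'g set \<Rightarrow> 'm set \<Rightarrow> ('g \<times> 'm) set \<Rightarrow> ('g set \<times> 'm set) set" where
  "concepts G M I = {(A, B). A \<subseteq> G \<and> B \<subseteq> M \<and> intent_of G M I A = B \<and> extent_of G M I B = A}"

definition concept_le :: "('g set \<times> 'm set) \<Rightarrow> ('g set \<times> 'm set) \<Rightarrow> bool" where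
  "concept_le c d \<longleftrightarrow> fst c \<subseteq> fst d"

definition lsup :: "'a set \<Rightarrow> ('a \<Rightarrow> 'a \<Rightarrow> bool) \<Rightarrow> 'a \<Rightarrow> 'a \<Rightarrow> 'a" where
  "lsup L le x y = (THE z. z \<in> L \<and> le x z \<and> le y z \<and> (\<forall>w\<in>L. le x w \<and> le y w \<longrightarrow> le z w))"

definition linf :: "'a set \<Rightarrow> ('a \<Rightarrow> 'a \<Rightarrow> bool) \<Rightarrow> 'a \<Rightarrow> 'a \<Rightarrow> 'a" where
  "linf L le x y = (THE z. z \<in> L \<and> le z x \<and> le z y \<and> (\<forall>w\<in>L. le w x \<and> le w y \<longrightarrow> le w z))"

definition interval :: "'a set \<Rightarrow> ('a \<Rightarrow> 'a \<Rightarrow> bool) \<Rightarrow> 'a \<Rightarrow> 'a \<Rightarrow> 'a set" where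
  "interval L le u v = {x \<in> L. le u x \<and> le x v}"

definition sup_prime_in_down :: "'a set \<Rightarrow> ('a \<Rightarrow> 'a \<Rightarrow> bool) \<Rightarrow> 'a \<Rightarrow> 'a \<Rightarrow> bool" where
  "sup_prime_in_down L le u v \<longleftrightarrow>
     (\<forall>x\<in>L. \<forall>y\<in>L. le x v \<and> le y v \<longrightarrow> le u (lsup L le x y) \<longrightarrow> le u x \<or> le u y)"

definition inf_prime_in_up :: "'a set \<Rightarrow> ('a \<Rightarrow> 'a \<Rightarrow> bool) \<Rightarrow> 'a \<Rightarrow> 'a \<Rightarrow> bool" where
  "inf_prime_in_up L le v u \<longleftrightarrow>
     (\<forall>x\<in>L. \<forall>y\<in>L. le u x \<and> le u y \<longrightarrow> le (linf L le x y) v \<longrightarrow> le x v \<or> le y v)"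

definition quasi_dismantling :: "'a set \<Rightarrow> ('a \<Rightarrow> 'a \<Rightarrow> bool) \<Rightarrow> 'a \<Rightarrow> 'a \<Rightarrow> bool" where
  "quasi_dismantling L le u v \<longleftrightarrow> sup_prime_in_down L le u v \<and> inf_prime_in_up L le v u"

definition lower_neighbor :: "'a set \<Rightarrow> ('a \<Rightarrow> 'a \<Rightarrow> bool) \<Rightarrow> 'a \<Rightarrow> 'a \<Rightarrow> bool" where
  "lower_neighbor L le x y \<longleftrightarrow> x \<in> L \<and> y \<in> L \<and> le x y \<and> x \<noteq> y \<and>
     \<not> (\<exists>z\<in>L. le x z \<and> le z y \<and> z \<noteq> x \<and> z \<noteq> y)"

definition sup_irreducible :: "'a set \<Rightarrow> ('a \<Rightarrow> 'a \<Rightarrow> bool) \<Rightarrow> 'a \<Rightarrow> bool" where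
  "sup_irreducible L le s \<longleftrightarrow> card {x. lower_neighbor L le x s} = 1"

definition inf_irreducible :: "'a set \<Rightarrow> ('a \<Rightarrow> 'a \<Rightarrow> bool) \<Rightarrow> 'a \<Rightarrow> bool" where
  "inf_irreducible L le s \<longleftrightarrow> card {y. lower_neighbor L le s y} = 1"

definition doubly_irreducible :: "'a set \<Rightarrow> ('a \<Rightarrow> 'a \<Rightarrow> bool) \<Rightarrow> 'a \<Rightarrow> bool" where
  "doubly_irreducible L le s \<longleftrightarrow> sup_irreducible L le s \<and> inf_irreducible L le s"

definition is_top :: "'a set \<Rightarrow> ('a \<Rightarrow> 'a \<Rightarrow> bool) \<Rightarrow> 'a \<Rightarrow> bool" where
  "is_top L le s \<longleftrightarrow> s \<in> L \<and> (\<forall>x\<in>L. le x s)"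

definition is_bot :: "'a set \<Rightarrow> ('a \<Rightarrow> 'a \<Rightarrow> bool) \<Rightarrow> 'a \<Rightarrow> bool" where
  "is_bot L le s \<longleftrightarrow> s \<in> L \<and> (\<forall>x\<in>L. le s x)"

end

theory Submission imports Defs begin

definition plat :: "'a set \<Rightarrow> ('a \<Rightarrow> 'a \<Rightarrow> bool) \<Rightarrow> bool" where
  "plat L le \<longleftrightarrow> finite L \<and> (\<forall>x\<in>L. le x x)
    \<and> (\<forall>x\<in>L. \<forall>y\<in>L. le x y \<and> le y x \<longrightarrow> x = y)
    \<and> (\<forall>x\<in>L. \<forall>y\<in>L. \<forall>z\<in>L. le x y \<and> le y z \<longrightarrow> le x z)
    \<and> (\<forall>x\<in>L. \<forall>y\<in>L. \<exists>z\<in>L. le x z \<and> le y z \<and> (\<forall>w\<in>L. le x w \<and> le y w \<longrightarrow> le z w))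
    \<and> (\<forall>x\<in>L. \<forall>y\<in>L. \<exists>z\<in>L. le z x \<and> le z y \<and> (\<forall>w\<in>L. le w x \<and> le w y \<longrightarrow> le w z))"

lemma plat_fin: "plat L le \<Longrightarrow> finite L" unfolding plat_def by (elim conjE)
lemma plat_refl': "plat L le \<Longrightarrow> \<forall>x\<in>L. le x x" unfolding plat_def by (elim conjE)
lemma plat_antisym': "plat L le \<Longrightarrow> \<forall>x\<in>L. \<forall>y\<in>L. le x y \<and> le y x \<longrightarrow> x = y"
  unfolding plat_def by (elim conjE)
lemma plat_trans': "plat L le \<Longrightarrow> \<forall>x\<in>L. \<forall>y\<in>L. \<forall>z\<in>L. le x y \<and> le y z \<longrightarrow> le x z"
  unfolding plat_def by (elim conjE)
lemma plat_sup': "plat L le \<Longrightarrow> \<forall>x\<in>L. \<forall>y\<in>L. \<exists>z\<in>L. le x z \<and> le y z \<and> (\<forall>w\<in>L. le x w \<and> le y w \<longrightarrow> le z w)"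
  unfolding plat_def by (elim conjE)
lemma plat_inf': "plat L le \<Longrightarrow> \<forall>x\<in>L. \<forall>y\<in>L. \<exists>z\<in>L. le z x \<and> le z y \<and> (\<forall>w\<in>L. le w x \<and> le w y \<longrightarrow> le w z)"
  unfolding plat_def by (elim conjE)
lemma plat_refl: "plat L le \<Longrightarrow> x \<in> L \<Longrightarrow> le x x" using plat_refl' by fast
lemma plat_antisym: "plat L le \<Longrightarrow> x \<in> L \<Longrightarrow> y \<in> L \<Longrightarrow> le x y \<Longrightarrow> le y x \<Longrightarrow> x = y"
  using plat_antisym' by fast
lemma plat_trans: "plat L le \<Longrightarrow> x \<in> L \<Longrightarrow> y \<in> L \<Longrightarrow> z \<in> L \<Longrightarrow> le x y \<Longrightarrow> le y z \<Longrightarrow> le x z"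
  using plat_trans' by fast
lemma plat_sup: "plat L le \<Longrightarrow> x \<in> L \<Longrightarrow> y \<in> L \<Longrightarrow> \<exists>z\<in>L. le x z \<and> le y z \<and> (\<forall>w\<in>L. le x w \<and> le y w \<longrightarrow> le z w)"
  using plat_sup' by fast
lemma plat_inf: "plat L le \<Longrightarrow> x \<in> L \<Longrightarrow> y \<in> L \<Longrightarrow> \<exists>z\<in>L. le z x \<and> le z y \<and> (\<forall>w\<in>L. le w x \<and> le w y \<longrightarrow> le w z)"
  using plat_inf' by fast

lemma plat_dual: assumes "plat L le" shows "plat L (\<lambda>x y. le y x)"
proof -
  have a: "\<forall>x\<in>L. \<forall>y\<in>L. le y x \<and> le x y \<longrightarrow> x = y"
    using plat_antisym[OF assms] by fast
  have t: "\<forall>x\<in>L. \<forall>y\<in>L. \<forall>z\<in>L. le y x \<and> le z y \<longrightarrow> le z x"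
    using plat_trans[OF assms] by fast
  have s: "\<forall>x\<in>L. \<forall>y\<in>L. \<exists>z\<in>L. le z x \<and> le z y \<and> (\<forall>w\<in>L. le w x \<and> le w y \<longrightarrow> le w z)"
    using plat_inf'[OF assms] by simp
  have i: "\<forall>x\<in>L. \<forall>y\<in>L. \<exists>z\<in>L. le x z \<and> le y z \<and> (\<forall>w\<in>L. le x w \<and> le y w \<longrightarrow> le z w)"
    using plat_sup'[OF assms] by simp
  have r: "\<forall>x\<in>L. le x x" using plat_refl'[OF assms] .
  show ?thesis using plat_fin[OF assms] r a t s i unfolding plat_def
    by (intro conjI) assumption+
qed

lemma lsup_props:
  assumes "plat L le" "x \<in> L" "y \<in> L"
  shows "lsup L le x y \<in> L \<and> le x (lsup L le x y) \<and> le y (lsup L le x y) \<and>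
     (\<forall>w\<in>L. le x w \<and> le y w \<longrightarrow> le (lsup L le x y) w)"
proof -
  obtain z where z: "z\<in>L" "le x z" "le y z" "\<forall>w\<in>L. le x w \<and> le y w \<longrightarrow> le z w"
    using plat_sup[OF assms] by meson
  have "\<exists>!z. z \<in> L \<and> le x z \<and> le y z \<and> (\<forall>w\<in>L. le x w \<and> le y w \<longrightarrow> le z w)"
  proof (rule ex1I[of _ z])
    show "z \<in> L \<and> le x z \<and> le y z \<and> (\<forall>w\<in>L. le x w \<and> le y w \<longrightarrow> le z w)" using z by blast
  next
    fix z' assume "z' \<in> L \<and> le x z' \<and> le y z' \<and> (\<forall>w\<in>L. le x w \<and> le y w \<longrightarrow> le z' w)"
    then have "z' \<in> L" "le z' z" "le z z'" using z by auto
    then show "z' = z" using z(1) plat_antisym[OF assms(1)] by metis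
  qed
  from theI'[OF this] show ?thesis unfolding lsup_def .
qed

lemma below_neighbor:
  assumes "plat L le" "x \<in> L" "s \<in> L" "le x s" "x \<noteq> s"
  shows "\<exists>c. lower_neighbor L le c s \<and> le x c"
proof -
  define S where "S = {z\<in>L. le x z \<and> le z s \<and> z \<noteq> s}"
  define f where "f c = card {w\<in>L. le w c}" for c
  have fin: "finite L" using plat_fin[OF assms(1)] .
  have finS: "finite S" using fin unfolding S_def by simp
  have "x \<in> S" using assms(2,4,5) plat_refl[OF assms(1) assms(2)] unfolding S_def by simp
  then have ne: "S \<noteq> {}" by blast
  have "Max (f ` S) \<in> f ` S" using Max_in finS ne by simp
  then obtain c where c: "Max (f ` S) = f c" "c \<in> S" by (rule imageE)
  have cL: "c \<in> L" "le x c" "le c s" "c \<noteq> s" using c(2) unfolding S_def by simp_all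
  have "lower_neighbor L le c s"
  proof (rule ccontr)
    assume nl: "\<not> lower_neighbor L le c s"
    have "\<exists>z\<in>L. le z s \<and> le c z \<and> z \<noteq> c \<and> z \<noteq> s"
      using nl cL assms(3) unfolding lower_neighbor_def by simp
    then obtain z where z: "z\<in>L" "le c z" "le z s" "z \<noteq> c" "z \<noteq> s" by blast
    have "le x z" using plat_trans[OF assms(1) assms(2) cL(1) z(1) cL(2) z(2)] .
    then have zS: "z \<in> S" using z unfolding S_def by simp
    have sub: "{w\<in>L. le w c} \<subseteq> {w\<in>L. le w z}"
    proof
      fix w assume "w \<in> {w\<in>L. le w c}"
      then have "w \<in> L" "le w c" by simp_all
      then show "w \<in> {w\<in>L. le w z}" using plat_trans[OF assms(1) _ cL(1) z(1) _ z(2)] by simp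
    qed
    have "\<not> le z c" using z cL plat_antisym[OF assms(1) z(1) cL(1)] by metis
    then have n1: "z \<notin> {w\<in>L. le w c}" by simp
    have n2: "z \<in> {w\<in>L. le w z}" using z plat_refl[OF assms(1)] by simp
    have ps: "{w\<in>L. le w c} \<subset> {w\<in>L. le w z}" using sub n1 n2 by blast
    have "finite {w\<in>L. le w z}" using fin by simp
    then have "f c < f z" unfolding f_def using ps by (rule psubset_card_mono)
    moreover have "f z \<le> Max (f ` S)" using zS finS by simp
    ultimately show False using c(1) by linarith
  qed
  then show ?thesis using cL(2) by blast
qed

lemma key:
  assumes P: "plat L le" and s: "s \<in> L"
  shows "sup_prime_in_down L le s s \<longleftrightarrow> is_bot L le s \<or> sup_irreducible L le s"
proof
  assume sp: "sup_prime_in_down L le s s"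
  have spr: "le s x \<or> le s y" if "x \<in> L" "y \<in> L" "le x s" "le y s" "le s (lsup L le x y)" for x y
    using sp that unfolding sup_prime_in_down_def by blast
  show "is_bot L le s \<or> sup_irreducible L le s"
  proof (cases "is_bot L le s")
    case True then show ?thesis by blast
  next
    case False
    then obtain x where x: "x \<in> L" "\<not> le s x" using s unfolding is_bot_def by blast
    obtain m where m: "m \<in> L" "le m s" "le m x" using plat_inf[OF P s x(1)] by blast
    have "m \<noteq> s" using m x by blast
    then obtain a where a: "lower_neighbor L le a s"
      using below_neighbor[OF P m(1) s m(2)] by blast
    have uniq: "b = a" if b: "lower_neighbor L le b s" for b
    proof (rule ccontr)
      assume ne: "b \<noteq> a"
      let ?j = "lsup L le a b"
      have aL: "a \<in> L" "le a s" "a \<noteq> s" using a unfolding lower_neighbor_def by simp_all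
      have bL: "b \<in> L" "le b s" "b \<noteq> s" using b unfolding lower_neighbor_def by simp_all
      have anb: "\<not> (\<exists>z\<in>L. le a z \<and> le z s \<and> z \<noteq> a \<and> z \<noteq> s)"
        using a unfolding lower_neighbor_def by simp
      have bnb: "\<not> (\<exists>z\<in>L. le b z \<and> le z s \<and> z \<noteq> b \<and> z \<noteq> s)"
        using b unfolding lower_neighbor_def by simp
      have jL: "?j \<in> L" "le a ?j" "le b ?j" and jall: "\<forall>w\<in>L. le a w \<and> le b w \<longrightarrow> le ?j w"
        using lsup_props[OF P aL(1) bL(1)] by simp_all
      have js: "le ?j s" using jall s aL(2) bL(2) by simp
      have "?j = a \<or> ?j = s" using anb jL(1,2) js by blast
      moreover have "?j \<noteq> a"
      proof
        assume "?j = a"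
        then have "le b a" using jL(3) by simp
        then show False using bnb aL ne by blast
      qed
      ultimately have "?j = s" by blast
      then have "le s ?j" using plat_refl[OF P s] by simp
      then have "le s a \<or> le s b" using spr[OF aL(1) bL(1) aL(2) bL(2)] by simp
      then show False using aL bL plat_antisym[OF P aL(1) s] plat_antisym[OF P bL(1) s] by metis
    qed
    have "{x. lower_neighbor L le x s} = {a}" using a uniq by blast
    then show ?thesis unfolding sup_irreducible_def by simp
  qed
next
  assume h: "is_bot L le s \<or> sup_irreducible L le s"
  show "sup_prime_in_down L le s s"
    unfolding sup_prime_in_down_def
  proof (intro ballI impI)
    fix x y assume xL: "x \<in> L" and yL: "y \<in> L" and xy: "le x s \<and> le y s" and sj: "le s (lsup L le x y)"
    have jL: "lsup L le x y \<in> L" and jall: "\<forall>w\<in>L. le x w \<and> le y w \<longrightarrow> le (lsup L le x y) w"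
      using lsup_props[OF P xL yL] by simp_all
    show "le s x \<or> le s y"
    proof (cases "is_bot L le s")
      case True then show ?thesis using xL unfolding is_bot_def by blast
    next
      case False
      with h have "card {x. lower_neighbor L le x s} = 1" unfolding sup_irreducible_def by blast
      then obtain a where A: "{x. lower_neighbor L le x s} = {a}" by (rule card_1_singletonE)
      then have a: "lower_neighbor L le a s" by blast
      have below: "le z a" if zz: "z \<in> L" "le z s" "z \<noteq> s" for z
      proof -
        obtain c where "lower_neighbor L le c s" "le z c" using below_neighbor[OF P zz(1) s zz(2,3)] by blast
        moreover then have "c = a" using A by blast
        ultimately show ?thesis by simp
      qed
      show ?thesis
      proof (rule ccontr)
        assume "\<not> ?thesis"
        then have "\<not> le s x" "\<not> le s y" by simp_all
        then have "x \<noteq> s" "y \<noteq> s" using plat_refl[OF P s] by auto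
        then have xa: "le x a" and ya: "le y a" using below xL yL xy by auto
        have aL: "a \<in> L" "le a s" "a \<noteq> s" using a unfolding lower_neighbor_def by simp_all
        have "le (lsup L le x y) a" using jall aL(1) xa ya by simp
        then have "le s a" using plat_trans[OF P s jL aL(1) sj] by simp
        then show False using aL plat_antisym[OF P aL(1) s] by simp
      qed
    qed
  qed
qed

lemma dual_lsup: "lsup L (\<lambda>x y. le y x) = linf L le"
  by (intro ext) (simp add: lsup_def linf_def)

lemma dual_prime: "inf_prime_in_up L le v u = sup_prime_in_down L (\<lambda>x y. le y x) v u"
  by (simp add: inf_prime_in_up_def sup_prime_in_down_def dual_lsup)

lemma dual_ln: "lower_neighbor L (\<lambda>x y. le y x) x y = lower_neighbor L le y x"
  unfolding lower_neighbor_def by auto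

lemma dual_irr: "inf_irreducible L le s = sup_irreducible L (\<lambda>x y. le y x) s"
proof -
  have h: "\<And>y. lower_neighbor L (\<lambda>x y. le y x) y s = lower_neighbor L le s y" by (rule dual_ln)
  show ?thesis unfolding inf_irreducible_def sup_irreducible_def h ..
qed

lemma dual_top: "is_top L le s = is_bot L (\<lambda>x y. le y x) s"
  by (simp add: is_top_def is_bot_def)

lemma key2:
  assumes P: "plat L le" and s: "s \<in> L"
  shows "quasi_dismantling L le s s \<longleftrightarrow>
    (doubly_irreducible L le s \<or> (is_top L le s \<and> sup_irreducible L le s)
     \<or> (is_bot L le s \<and> inf_irreducible L le s) \<or> (is_top L le s \<and> is_bot L le s))"
proof -
  have k1: "sup_prime_in_down L le s s = (is_bot L le s \<or> sup_irreducible L le s)"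
    by (rule key[OF P s])
  have k2: "inf_prime_in_up L le s s = (is_top L le s \<or> inf_irreducible L le s)"
    unfolding dual_prime dual_irr dual_top by (rule key[OF plat_dual[OF P] s])
  show ?thesis unfolding quasi_dismantling_def doubly_irreducible_def k1 k2 by blast
qed

lemma concepts_plat:
  assumes "finite G" "finite M"
  shows "plat (concepts G M I) concept_le"
proof -
  let ?i = "intent_of G M I" and ?e = "extent_of G M I"
  have fin: "finite (concepts G M I)"
    by (rule finite_subset[of _ "Pow G \<times> Pow M"]) (auto simp: concepts_def assms)
  have iU: "?i (A1 \<union> A2) = ?i A1 \<inter> ?i A2" for A1 A2 by (auto simp: intent_of_def)
  have eU: "?e (B1 \<union> B2) = ?e B1 \<inter> ?e B2" for B1 B2 by (auto simp: extent_of_def)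
  have iei: "A \<subseteq> G \<Longrightarrow> ?i (?e (?i A)) = ?i A" for A by (auto simp: intent_of_def extent_of_def)
  have eie: "B \<subseteq> M \<Longrightarrow> ?e (?i (?e B)) = ?e B" for B by (auto simp: intent_of_def extent_of_def)
  have eM: "?e B \<subseteq> G" for B by (auto simp: extent_of_def)
  have iM: "?i A \<subseteq> M" for A by (auto simp: intent_of_def)
  have eanti: "B \<subseteq> B' \<Longrightarrow> ?e B' \<subseteq> ?e B" for B B' by (auto simp: extent_of_def)
  have ianti: "A \<subseteq> A' \<Longrightarrow> ?i A' \<subseteq> ?i A" for A A' by (auto simp: intent_of_def)
  have sup: "\<exists>z\<in>concepts G M I. concept_le x z \<and> concept_le y z \<and>
      (\<forall>w\<in>concepts G M I. concept_le x w \<and> concept_le y w \<longrightarrow> concept_le z w)"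
    if x: "x \<in> concepts G M I" and y: "y \<in> concepts G M I" for x y
  proof -
    obtain A1 B1 A2 B2 where xy: "x = (A1,B1)" "y = (A2,B2)" by fastforce
    have c1: "?i A1 = B1" "?e B1 = A1" and c2: "?i A2 = B2" "?e B2 = A2"
      using x y xy by (auto simp: concepts_def)
    have sub: "A1 \<union> A2 \<subseteq> G" using x y xy by (auto simp: concepts_def)
    have "B1 \<inter> B2 = ?i (A1 \<union> A2)" using iU c1 c2 by simp
    then have zc: "(?e (B1 \<inter> B2), B1 \<inter> B2) \<in> concepts G M I"
      using iei[OF sub] eM iM by (auto simp: concepts_def)
    show ?thesis
    proof (rule bexI[OF _ zc], intro conjI ballI impI)
      show "concept_le x (?e (B1 \<inter> B2), B1 \<inter> B2)"
        using eanti[of "B1 \<inter> B2" B1] c1 xy by (simp add: concept_le_def)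
      show "concept_le y (?e (B1 \<inter> B2), B1 \<inter> B2)"
        using eanti[of "B1 \<inter> B2" B2] c2 xy by (simp add: concept_le_def)
      fix w assume w: "w \<in> concepts G M I" "concept_le x w \<and> concept_le y w"
      obtain A B where wAB: "w = (A,B)" by fastforce
      have cw: "?i A = B" "?e B = A" using w wAB by (auto simp: concepts_def)
      have "B \<subseteq> B1 \<inter> B2" using ianti[of A1 A] ianti[of A2 A] w wAB xy c1 c2 cw
        by (auto simp: concept_le_def)
      then show "concept_le (?e (B1 \<inter> B2), B1 \<inter> B2) w"
        using eanti[of B "B1 \<inter> B2"] cw wAB by (simp add: concept_le_def)
    qed
  qed
  have inf: "\<exists>z\<in>concepts G M I. concept_le z x \<and> concept_le z y \<and>
      (\<forall>w\<in>concepts G M I. concept_le w x \<and> concept_le w y \<longrightarrow> concept_le w z)"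
    if x: "x \<in> concepts G M I" and y: "y \<in> concepts G M I" for x y
  proof -
    obtain A1 B1 A2 B2 where xy: "x = (A1,B1)" "y = (A2,B2)" by fastforce
    have c1: "?i A1 = B1" "?e B1 = A1" and c2: "?i A2 = B2" "?e B2 = A2"
      using x y xy by (auto simp: concepts_def)
    have sub: "B1 \<union> B2 \<subseteq> M" using x y xy by (auto simp: concepts_def)
    have "A1 \<inter> A2 = ?e (B1 \<union> B2)" using eU c1 c2 by simp
    then have zc: "(A1 \<inter> A2, ?i (A1 \<inter> A2)) \<in> concepts G M I"
      using eie[OF sub] eM iM by (auto simp: concepts_def)
    show ?thesis
      by (rule bexI[OF _ zc]) (auto simp: concept_le_def xy)
  qed
  have anti: "\<forall>x\<in>concepts G M I. \<forall>y\<in>concepts G M I. concept_le x y \<and> concept_le y x \<longrightarrow> x = y"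
    by (auto simp: concepts_def concept_le_def)
  have rf: "\<forall>x\<in>concepts G M I. concept_le x x" by (simp add: concept_le_def)
  have tr: "\<forall>x\<in>concepts G M I. \<forall>y\<in>concepts G M I. \<forall>z\<in>concepts G M I.
      concept_le x y \<and> concept_le y z \<longrightarrow> concept_le x z" by (auto simp add: concept_le_def)
  have sup': "\<forall>x\<in>concepts G M I. \<forall>y\<in>concepts G M I. \<exists>z\<in>concepts G M I. concept_le x z \<and> concept_le y z \<and>
      (\<forall>w\<in>concepts G M I. concept_le x w \<and> concept_le y w \<longrightarrow> concept_le z w)"
    using sup by (intro ballI)
  have inf': "\<forall>x\<in>concepts G M I. \<forall>y\<in>concepts G M I. \<exists>z\<in>concepts G M I. concept_le z x \<and> concept_le z y \<and>
      (\<forall>w\<in>concepts G M I. concept_le w x \<and> concept_le w y \<longrightarrow> concept_le w z)"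
    using inf by (intro ballI)
  show ?thesis using fin rf anti tr sup' inf' unfolding plat_def
    by (intro conjI) assumption+
qed

theorem proposition3:
  fixes G :: "'g set" and M :: "'m set" and I :: "('g \<times> 'm) set"
    and u v s :: "'g set \<times> 'm set"
  assumes "finite G" and "finite M" and "I \<subseteq> G \<times> M"
    and "u \<in> concepts G M I" and "v \<in> concepts G M I" and "concept_le u v"
    and "interval (concepts G M I) concept_le u v = {s}"
  shows "quasi_dismantling (concepts G M I) concept_le u v \<longleftrightarrow>
           (doubly_irreducible (concepts G M I) concept_le s
            \<or> (is_top (concepts G M I) concept_le s \<and> sup_irreducible (concepts G M I) concept_le s)
            \<or> (is_bot (concepts G M I) concept_le s \<and> inf_irreducible (concepts G M I) concept_le s)
            \<or> (is_top (concepts G M I) concept_le s \<and> is_bot (concepts G M I) concept_le s))"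
proof -
  have "u \<in> interval (concepts G M I) concept_le u v" "v \<in> interval (concepts G M I) concept_le u v"
    using assms(4,5,6) by (auto simp: interval_def concept_le_def)
  then have uv: "u = s" "v = s" using assms(7) by auto
  have "s \<in> concepts G M I" using assms(4) uv by simp
  then show ?thesis using key2[OF concepts_plat[OF assms(1,2)]] uv by simp
qed

end
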